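(* Let $C\subseteq\mathbb{R}^2$ be a strictly convex closed differentiable curve, and let $h\colon C\to C$ be the map sending $p\in C$ to the unique point of intersection of the normal line to $C$ at $p$ with $C\setminus\{p\}$. Then $h$ has degree one; in particular $h$ is surjective.
   Context: A curve $C\subseteq\mathbb{R}^2$ is strictly convex if $C=\partial Y$ for some $Y\subseteq\mathbb{R}^2$ such that $ty+(1-t)y'$ lies in the interior of $Y$ for all $y,y'\in Y$, $t\in(0,1)$. The normal line at $p$ is the line through $p$ perpendicular to the tangent line of $C$ at $p$; the map $h$ is continuous. *)

theory Defs
  imports "HOL-Analysis.Analysis" "HOL-Homology.Homology"
begin

text \<open>The degree is independent of the
  chosen homeomorphism; we require C to be a topological circle and the value to
  be d for every such homeomorphism.\<close>
definition circle_map_degree :: "'a::topological_space set \<Rightarrow> ('a \<Rightarrow> 'a) \<Rightarrow> int \<Rightarrow> bool" where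
  "circle_map_degree C h d \<longleftrightarrow>
     (\<exists>\<phi> \<psi>. homeomorphic_maps (nsphere 1) (top_of_set C) \<phi> \<psi>) \<and>
     (\<forall>\<phi> \<psi>. homeomorphic_maps (nsphere 1) (top_of_set C) \<phi> \<psi> \<longrightarrow>
        Brouwer_degree2 1 (\<psi> \<circ> h \<circ> \<phi>) = d)"

definition strictly_convex_set :: "'a::real_normed_vector set \<Rightarrow> bool" where
  "strictly_convex_set Y \<longleftrightarrow>
     (\<forall>y\<in>Y. \<forall>y'\<in>Y. \<forall>t::real. 0 < t \<and> t < 1 \<longrightarrow> t *\<^sub>R y + (1 - t) *\<^sub>R y' \<in> interior Y)"

end

theory Submission
  imports Defs
begin

lemma seg_avoid:
  fixes a b :: complex
  assumes "norm a = 1" "norm b = 1" "a \<noteq> -b"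
  shows "0 \<notin> closed_segment a b"
proof
  assume "0 \<in> closed_segment a b"
  then obtain u where u: "0\<le>u" "u\<le>1" and e: "(1-u) *\<^sub>R a + u *\<^sub>R b = 0"
    by (auto simp: closed_segment_def)
  then have "(1-u) *\<^sub>R a = - (u *\<^sub>R b)" by (simp add: eq_neg_iff_add_eq_0)
  then have "norm ((1-u) *\<^sub>R a) = norm (u *\<^sub>R b)" by (metis norm_minus_cancel)
  then have "1-u = u" using u assms by simp
  then have "u = 1/2" by simp
  with e have "(1/2) *\<^sub>R (a + b) = 0" by (simp add: scaleR_right_distrib)
  then have "a + b = 0" by simp
  then show False using assms(3) by (simp add: eq_neg_iff_add_eq_0)
qed

lemma circle_homotopic:
  fixes f g :: "complex \<Rightarrow> complex"
  assumes cf: "continuous_on (sphere 0 1) f" and cg: "continuous_on (sphere 0 1) g"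
    and fK: "f ` sphere 0 1 \<subseteq> sphere 0 1" and gK: "g ` sphere 0 1 \<subseteq> sphere 0 1"
    and ne: "\<And>z. z \<in> sphere 0 1 \<Longrightarrow> f z \<noteq> - g z"
  shows "homotopic_with_canon (\<lambda>_. True) (sphere 0 1) (sphere 0 1) f g"
proof -
  have "homotopic_with_canon (\<lambda>_. True) (sphere 0 1) (-{0}) f g"
  proof (rule homotopic_with_linear[OF cf cg])
    fix x :: complex assume x: "x \<in> sphere 0 1"
    have "0 \<notin> closed_segment (f x) (g x)"
    proof -
      have "f x \<in> sphere 0 1" "g x \<in> sphere 0 1" using fK gK x by blast+
      then show ?thesis using seg_avoid[of "f x" "g x"] x ne by auto
    qed
    then show "closed_segment (f x) (g x) \<subseteq> - {0}" by auto
  qed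
  then have "homotopic_with_canon (\<lambda>_. True) (sphere 0 1) (sphere 0 1) (sgn \<circ> f) (sgn \<circ> g)"
    by (rule homotopic_with_compose_continuous_left)
       (auto intro!: continuous_intros simp: norm_sgn)
  then show ?thesis
    proof (rule homotopic_with_eq)
    fix x assume "x \<in> topspace (top_of_set (sphere (0::complex) 1))"
    then have x: "x \<in> sphere 0 1" by simp
    have "f x \<in> sphere 0 1" "g x \<in> sphere 0 1" using fK gK x by blast+
    then show "f x = (sgn \<circ> f) x" "g x = (sgn \<circ> g) x" by (auto simp: sgn_div_norm)
  qed auto
qed

lemma fpf_degree:
  assumes cont: "continuous_map (nsphere 1) (nsphere 1) g"
    and nf: "\<And>x. x \<in> topspace (nsphere 1) \<Longrightarrow> g x \<noteq> x"
  shows "Brouwer_degree2 1 g = 1"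
proof -
  let ?K = "sphere (0::complex) 1"
  have po: "pairwise orthogonal (Basis::complex set)"
    by (auto simp: pairwise_def orthogonal_def inner_not_same_Basis)
  obtain e :: "(nat \<Rightarrow> real) \<Rightarrow> complex" and e'
    where ee0: "homeomorphic_maps (nsphere (2 - 1)) (top_of_set (sphere 0 1 \<inter> span Basis)) e e'"
    using homeomorphic_maps_nsphere_euclidean_sphere[of "Basis::complex set" 2]
      independent_Basis po by auto
  then have ee: "homeomorphic_maps (nsphere 1) (top_of_set ?K) e e'" by simp
  then have ce: "continuous_map (nsphere 1) (top_of_set ?K) e"
    and ce': "continuous_map (top_of_set ?K) (nsphere 1) e'"
    and i1: "\<And>x. x \<in> topspace (nsphere 1) \<Longrightarrow> e' (e x) = x"
    and i2: "\<And>y. y \<in> ?K \<Longrightarrow> e (e' y) = y"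
    by (auto simp: homeomorphic_maps_def)
  define F where "F = e \<circ> g \<circ> e'"
  have cF: "continuous_map (top_of_set ?K) (top_of_set ?K) F"
    unfolding F_def using continuous_map_compose[OF continuous_map_compose[OF ce' cont] ce] by (simp add: o_assoc)
  then have cF1: "continuous_on ?K F" and cF2: "F ` ?K \<subseteq> ?K"
    by (auto simp del: continuous_map_subtopology_eu simp: continuous_map_subtopology_eu[of ?K "?K"] image_subset_iff)
  have nF: "F z \<noteq> z" if z: "z \<in> ?K" for z
  proof
    assume eq: "F z = z"
    have t: "e' z \<in> topspace (nsphere 1)" using ce' z by (auto simp: continuous_map_def)
    then have t2: "g (e' z) \<in> topspace (nsphere 1)" using cont by (auto simp: continuous_map_def)
    have "e' (F z) = g (e' z)" unfolding F_def using i1[OF t2] by simp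
    with eq have "g (e' z) = e' z" by simp
    with nf[OF t] show False by simp
  qed
  have h1: "homotopic_with_canon (\<lambda>_. True) ?K ?K F uminus"
    by (rule circle_homotopic) (use cF1 cF2 nF in \<open>auto intro!: continuous_intros\<close>)
  have h2: "homotopic_with_canon (\<lambda>_. True) ?K ?K uminus (\<lambda>z. \<i> * z)"
  proof (rule circle_homotopic)
    fix z :: complex assume z: "z \<in> ?K"
    show "- z \<noteq> - (\<i> * z)"
    proof
      assume "- z = - (\<i> * z)"
      then have "(1 - \<i>) * z = 0" by (simp add: algebra_simps)
      moreover have "1 - \<i> \<noteq> 0" by (simp add: complex_eq_iff)
      ultimately have "z = 0" by simp
      then show False using z by simp
    qed
  qed (auto intro!: continuous_intros simp: norm_mult)
  have h3: "homotopic_with_canon (\<lambda>_. True) ?K ?K (\<lambda>z. \<i> * z) id"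
  proof (rule circle_homotopic)
    fix z :: complex assume z: "z \<in> ?K"
    show "\<i> * z \<noteq> - id z"
    proof
      assume "\<i> * z = - id z"
      then have "(1 + \<i>) * z = 0" by (simp add: algebra_simps)
      moreover have "1 + \<i> \<noteq> 0" by (simp add: complex_eq_iff)
      ultimately have "z = 0" by simp
      then show False using z by simp
    qed
  qed (auto intro!: continuous_intros simp: norm_mult)
  have hF: "homotopic_with_canon (\<lambda>_. True) ?K ?K F id"
    using homotopic_with_trans[OF h1 homotopic_with_trans[OF h2 h3]] .
  have "homotopic_with (\<lambda>_. True) (top_of_set ?K) (nsphere 1) (e' \<circ> F) (e' \<circ> id)"
    by (rule homotopic_with_compose_continuous_map_left[OF hF ce']) auto
  then have "homotopic_with (\<lambda>_. True) (nsphere 1) (nsphere 1) ((e' \<circ> F) \<circ> e) ((e' \<circ> id) \<circ> e)"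
    by (rule homotopic_with_compose_continuous_map_right[OF _ ce]) auto
  then have "homotopic_with (\<lambda>_. True) (nsphere 1) (nsphere 1) g id"
  proof (rule homotopic_with_eq)
    fix x assume x: "x \<in> topspace (nsphere 1)"
    then have t2: "g x \<in> topspace (nsphere 1)" using cont by (auto simp: continuous_map_def)
    show "g x = (e' \<circ> F \<circ> e) x" using x t2 i1 by (simp add: F_def)
    show "id x = (e' \<circ> id \<circ> e) x" using x i1 by simp
  qed auto
  then show ?thesis using Brouwer_degree2_homotopic by fastforce
qed


lemma degree_conj:
  fixes C :: "'a::topological_space set"
  assumes hm: "homeomorphic_maps (nsphere 1) (top_of_set C) \<phi> \<psi>"
    and hC: "h ` C \<subseteq> C" and hcont: "continuous_on C h"
    and nf: "\<And>c. c \<in> C \<Longrightarrow> h c \<noteq> c"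
  shows "continuous_map (nsphere 1) (nsphere 1) (\<psi> \<circ> h \<circ> \<phi>)"
    and "Brouwer_degree2 1 (\<psi> \<circ> h \<circ> \<phi>) = 1"
proof -
  have cp: "continuous_map (nsphere 1) (top_of_set C) \<phi>"
    and cq: "continuous_map (top_of_set C) (nsphere 1) \<psi>"
    and i1: "\<And>x. x \<in> topspace (nsphere 1) \<Longrightarrow> \<psi> (\<phi> x) = x"
    and i2: "\<And>y. y \<in> C \<Longrightarrow> \<phi> (\<psi> y) = y"
    using hm by (auto simp: homeomorphic_maps_def)
  have ch: "continuous_map (top_of_set C) (top_of_set C) h"
    using hC hcont by (auto simp: image_subset_iff)
  show cg: "continuous_map (nsphere 1) (nsphere 1) (\<psi> \<circ> h \<circ> \<phi>)"
    using continuous_map_compose[OF continuous_map_compose[OF cp ch] cq] by (simp add: o_assoc)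
  show "Brouwer_degree2 1 (\<psi> \<circ> h \<circ> \<phi>) = 1"
  proof (rule fpf_degree[OF cg])
    fix x assume x: "x \<in> topspace (nsphere 1)"
    have px: "\<phi> x \<in> C" using cp x by (auto simp: continuous_map_def)
    then have "h (\<phi> x) \<in> C" using hC by blast
    show "(\<psi> \<circ> h \<circ> \<phi>) x \<noteq> x"
    proof
      assume "(\<psi> \<circ> h \<circ> \<phi>) x = x"
      then have "\<phi> (\<psi> (h (\<phi> x))) = \<phi> x" by simp
      with i2[OF \<open>h (\<phi> x) \<in> C\<close>] have "h (\<phi> x) = \<phi> x" by simp
      with nf[OF px] show False by simp
    qed
  qed
qed

theorem lemma6p3:
  fixes Y :: "(real^2) set" and C :: "(real^2) set"
    and \<gamma> \<gamma>' :: "real \<Rightarrow> real^2" and h :: "real^2 \<Rightarrow> real^2"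
  assumes Y_sc: "strictly_convex_set Y"
    and C_def: "C = frontier Y"
    and \<gamma>_periodic: "\<And>t. \<gamma> (t + 1) = \<gamma> t"
    and \<gamma>_inj: "inj_on \<gamma> {0..<1}"
    and \<gamma>_img: "\<gamma> ` {0..1} = C"
    and \<gamma>_deriv: "\<And>t. (\<gamma> has_vector_derivative \<gamma>' t) (at t)"
    and \<gamma>_regular: "\<And>t. \<gamma>' t \<noteq> 0"
    and h_in: "\<And>t. h (\<gamma> t) \<in> C - {\<gamma> t}"
    and h_normal: "\<And>t. (h (\<gamma> t) - \<gamma> t) \<bullet> \<gamma>' t = 0"
    and h_cont: "continuous_on C h"
  shows "circle_map_degree C h 1 \<and> h ` C = C"
proof -
  have hC: "h ` C \<subseteq> C" and nf: "\<And>c. c \<in> C \<Longrightarrow> h c \<noteq> c"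
    using h_in \<gamma>_img by force+
  have g01: "\<gamma> 1 = \<gamma> 0" using \<gamma>_periodic[of 0] by simp
  have pth: "path \<gamma>" unfolding path_def
    by (rule continuous_on_vector_derivative) (use \<gamma>_deriv has_vector_derivative_at_within in blast)
  have lf: "loop_free \<gamma>" unfolding loop_free_def
  proof (intro ballI impI)
    fix x y assume x: "x \<in> {0..1}" and y: "y \<in> {0..1}" and e: "\<gamma> x = \<gamma> y"
    show "x = y \<or> x = 0 \<and> y = 1 \<or> x = 1 \<and> y = 0"
    proof (cases "x = 1")
      case True
      then show ?thesis
      proof (cases "y = 1")
        case False
        with y have "y \<in> {0..<1}" by auto
        moreover have "\<gamma> y = \<gamma> 0" using e True g01 by simp
        ultimately have "y = 0" using \<gamma>_inj by (auto simp: inj_on_def)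
        with True show ?thesis by simp
      qed simp
    next
      case xn: False
      with x have xi: "x \<in> {0..<1}" by auto
      show ?thesis
      proof (cases "y = 1")
        case True
        have "\<gamma> x = \<gamma> 0" using e True g01 by simp
        then have "x = 0" using \<gamma>_inj xi by (auto simp: inj_on_def)
        with True show ?thesis by simp
      next
        case False
        with y have "y \<in> {0..<1}" by auto
        then show ?thesis using \<gamma>_inj xi e by (auto simp: inj_on_def)
      qed
    qed
  qed
  have sp: "simple_path \<gamma>" using pth lf by (simp add: simple_path_def)
  have "path_image \<gamma> homeomorphic sphere (0::complex) 1"
    by (rule homeomorphic_simple_path_image_circle[OF sp]) (auto simp: pathfinish_def pathstart_def g01)
  then have "C homeomorphic sphere (0::complex) 1" using \<gamma>_img by (simp add: path_image_def)
  then obtain a b where ab: "homeomorphic_maps (top_of_set C) (top_of_set (sphere (0::complex) 1)) a b"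
    by (auto simp: homeomorphic_def)
  have po: "pairwise orthogonal (Basis::complex set)"
    by (auto simp: pairwise_def orthogonal_def inner_not_same_Basis)
  obtain e :: "(nat \<Rightarrow> real) \<Rightarrow> complex" and e'
    where ee0: "homeomorphic_maps (nsphere (2 - 1)) (top_of_set (sphere 0 1 \<inter> span Basis)) e e'"
    using homeomorphic_maps_nsphere_euclidean_sphere[of "Basis::complex set" 2]
      independent_Basis po by auto
  then have ee: "homeomorphic_maps (nsphere 1) (top_of_set (sphere (0::complex) 1)) e e'" by simp
  have ex: "homeomorphic_maps (nsphere 1) (top_of_set C) (b \<circ> e) (e' \<circ> a)"
    using homeomorphic_maps_compose[OF conjI[OF ee iffD1[OF homeomorphic_maps_sym ab]]] .
  have deg: "circle_map_degree C h 1"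
    unfolding circle_map_degree_def
    using ex degree_conj(2)[OF _ hC h_cont nf] by blast
  have surj: "h ` C = C"
  proof (rule ccontr)
    assume "h ` C \<noteq> C"
    with hC obtain c where c: "c \<in> C" "c \<notin> h ` C" by blast
    let ?\<phi> = "b \<circ> e" and ?\<psi> = "e' \<circ> a"
    have cp: "continuous_map (nsphere 1) (top_of_set C) ?\<phi>"
      and cq: "continuous_map (top_of_set C) (nsphere 1) ?\<psi>"
      and i2: "\<And>y. y \<in> C \<Longrightarrow> ?\<phi> (?\<psi> y) = y"
      using ex by (auto simp: homeomorphic_maps_def)
    have "?\<psi> c \<in> topspace (nsphere 1)" using cq c by (auto simp: continuous_map_def)
    moreover have "?\<psi> c \<notin> (?\<psi> \<circ> h \<circ> ?\<phi>) ` topspace (nsphere 1)"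
    proof
      assume "?\<psi> c \<in> (?\<psi> \<circ> h \<circ> ?\<phi>) ` topspace (nsphere 1)"
      then obtain x where x: "x \<in> topspace (nsphere 1)" and eq: "?\<psi> c = ?\<psi> (h (?\<phi> x))" by auto
      have "?\<phi> x \<in> C" using cp x by (auto simp: continuous_map_def)
      then have hx: "h (?\<phi> x) \<in> C" using hC by blast
      have "c = h (?\<phi> x)" using i2[OF c(1)] i2[OF hx] eq by metis
      with c(2) \<open>?\<phi> x \<in> C\<close> show False by blast
    qed
    ultimately have "(?\<psi> \<circ> h \<circ> ?\<phi>) ` topspace (nsphere 1) \<noteq> topspace (nsphere 1)" by blast
    then have "Brouwer_degree2 1 (?\<psi> \<circ> h \<circ> ?\<phi>) = 0"
      using Brouwer_degree2_nonsurjective degree_conj(1)[OF ex hC h_cont nf] by blast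
    with degree_conj(2)[OF ex hC h_cont nf] show False by simp
  qed
  show ?thesis using deg surj by blast
qed

end
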